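(* Let $SC_3(x)=\sum_{n\ge0} sc_3(\mathcal{D}_n)x^n$, where $sc_3(\mathcal{D}_n)$ is the number of saturated chains of length 3 in the Dyck lattice $\mathcal{D}_n$. Then $$ SC_3(x)=\sum_{n\ge0}\sum_{\gamma\in\mathcal{D}_n}\big(6\,\#(du,du,du)_\gamma+3\,\#(du,ddu)_\gamma+3\,\#(du,duu)_\gamma+\#(dddu)_\gamma+\#(duuu)_\gamma+2\,\#(dduu)_\gamma+2\,\#(dudu)_\gamma\big)x^n . $$
   Context: A Dyck path of semilength $n$ is a lattice path from $(0,0)$ to $(2n,0)$ with steps $u=(1,1)$ and $d=(1,-1)$ never going below the $x$-axis, identified with a word over $\{u,d\}$. $\mathcal{D}_n$ is the set of Dyck paths of semilength $n$ ordered by containment: $\gamma\le\gamma'$ iff $\gamma$ lies weakly below $\gamma'$. A saturated chain of length $h$ is a sequence $\gamma^{(0)}<\cdots<\gamma^{(h)}$ in which each element covers the previous one. For words $\gamma_1,\ldots,\gamma_k$, $\#(\gamma_1,\ldots,\gamma_k)_\gamma$ denotes the number of sets of pairwise disjoint (non-overlapping) occurrences of the factors $\gamma_1,\ldots,\gamma_k$ in $\gamma$ (occurrences of equal words being unordered); e.g. $\#(du,du,du)_\gamma$ is the number of 3-element sets of valleys of $\gamma$, $\#(du,ddu)_\gamma$ is the number of pairs consisting of an occurrence of $du$ and a non-overlapping occurrence of $ddu$, and $\#(w)_\gamma$ is the number of occurrences of the factor $w$ in $\gamma$. *)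

theory Defs
  imports Main "HOL-Library.Multiset" "HOL-Computational_Algebra.Formal_Power_Series"
begin

datatype step = U | D

type_synonym path = "step list"

definition height :: "path \<Rightarrow> nat \<Rightarrow> int" where
  "height w i = int (length (filter (\<lambda>s. s = U) (take i w)))
              - int (length (filter (\<lambda>s. s = D) (take i w)))"

definition dyck :: "path \<Rightarrow> bool" where
  "dyck w \<longleftrightarrow> (\<forall>i\<le>length w. 0 \<le> height w i) \<and> height w (length w) = 0"

definition Dyck :: "nat \<Rightarrow> path set" where
  "Dyck n = {w. dyck w \<and> length w = 2 * n}"

definition below :: "path \<Rightarrow> path \<Rightarrow> bool" where
  "below w w' \<longleftrightarrow> length w = length w' \<and> (\<forall>i\<le>length w. height w i \<le> height w' i)"

definition strictly_below :: "path \<Rightarrow> path \<Rightarrow> bool" where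
  "strictly_below w w' \<longleftrightarrow> below w w' \<and> w \<noteq> w'"

definition covers :: "nat \<Rightarrow> path \<Rightarrow> path \<Rightarrow> bool" where
  "covers n a b \<longleftrightarrow> a \<in> Dyck n \<and> b \<in> Dyck n \<and> strictly_below a b \<and>
     \<not> (\<exists>c\<in>Dyck n. strictly_below a c \<and> strictly_below c b)"

definition sc3 :: "nat \<Rightarrow> nat" where
  "sc3 n = card {(a, b, c, d). covers n a b \<and> covers n b c \<and> covers n c d}"

definition occ :: "path \<Rightarrow> path \<Rightarrow> nat set" where
  "occ v w = {i. i + length v \<le> length w \<and> take (length v) (drop i w) = v}"

text \<open>Number of sets of pairwise non-overlapping occurrences of the factors ws
  in w (occurrences of equal words unordered). An occurrence is a pair
  (factor, starting position).\<close>
definition num_occ :: "path list \<Rightarrow> path \<Rightarrow> nat" where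
  "num_occ ws w = card {S :: (path \<times> nat) set.
      finite S \<and> (\<forall>(v, i)\<in>S. i \<in> occ v w) \<and>
      image_mset fst (mset_set S) = mset ws \<and>
      (\<forall>(v, i)\<in>S. \<forall>(v', i')\<in>S. (v, i) \<noteq> (v', i') \<longrightarrow>
          {i..<i + length v} \<inter> {i'..<i' + length v'} = {})}"

end

theory Submission
  imports Defs
begin



definition V :: "path \<Rightarrow> nat set" where
  "V w = {i. Suc i < length w \<and> w!i = D \<and> w!Suc i = U}"
definition flip :: "path \<Rightarrow> nat \<Rightarrow> path" where
  "flip w i = w[i := U, Suc i := D]"

lemma height_0[simp]: "height w 0 = 0" by (simp add: height_def)

lemma height_Suc: "i < length w \<Longrightarrow> height w (Suc i) = height w i + (if w!i = U then 1 else -1)"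
  by (cases "w!i") (simp_all add: height_def take_Suc_conv_app_nth)

lemma height_par: "i \<le> length w \<Longrightarrow> height w i = 2 * int (length (filter (\<lambda>s. s=U) (take i w))) - int i"
proof (induction i)
  case 0 then show ?case by simp
next
  case (Suc i)
  then show ?case by (cases "w!i") (auto simp: height_Suc take_Suc_conv_app_nth)
qed

lemma height_gap: "length a = length b \<Longrightarrow> k \<le> length a \<Longrightarrow> height a k < height b k \<Longrightarrow> height a k + 2 \<le> height b k"
  using height_par[of k a] height_par[of k b] by simp

lemma heights_eq: "length w = length w' \<Longrightarrow> \<forall>i\<le>length w. height w i = height w' i \<Longrightarrow> w = w'"
proof (rule nth_equalityI)
  fix i assume l: "length w = length w'" and h: "\<forall>i\<le>length w. height w i = height w' i" and i: "i < length w"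
  have "height w (Suc i) = height w' (Suc i)" "height w i = height w' i" using h i by auto
  then show "w!i = w'!i" using height_Suc[of i w] height_Suc[of i w'] i l
    by (cases "w!i"; cases "w'!i") auto
qed

lemma length_flip[simp]: "length (flip w i) = length w" by (simp add: flip_def)

lemma nth_flip: "k < length w \<Longrightarrow> Suc i < length w \<Longrightarrow> flip w i ! k = (if k = Suc i then D else if k = i then U else w!k)"
  by (simp add: flip_def nth_list_update)

lemma height_flip: "i \<in> V w \<Longrightarrow> k \<le> length w \<Longrightarrow> height (flip w i) k = height w k + (if k = Suc i then 2 else 0)"
proof (induction k)
  case 0 then show ?case by simp
next
  case (Suc k)
  have k: "k < length w" using Suc by simp
  have v: "Suc i < length w" "w!i = D" "w!Suc i = U" using Suc(2) by (auto simp: V_def)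
  show ?case using Suc k v
    by (auto simp: height_Suc nth_flip)
qed

lemma flip_ne: "i \<in> V w \<Longrightarrow> flip w i \<noteq> w"
proof
  assume "i \<in> V w" "flip w i = w"
  then show False using height_flip[of i w "Suc i"] by (auto simp: V_def)
qed

lemma below_flip: "i \<in> V w \<Longrightarrow> below w (flip w i)"
  by (auto simp: below_def height_flip)

lemma dyck_flip: "w \<in> Dyck n \<Longrightarrow> i \<in> V w \<Longrightarrow> flip w i \<in> Dyck n"
proof -
  assume w: "w \<in> Dyck n" and i: "i \<in> V w"
  have l: "Suc i < length w" using i by (simp add: V_def)
  have "\<forall>k\<le>length w. 0 \<le> height (flip w i) k"
    using w by (auto simp: Dyck_def dyck_def height_flip[OF i])
  moreover have "height (flip w i) (length w) = 0"
    using w l by (auto simp: Dyck_def dyck_def height_flip[OF i])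
  ultimately show ?thesis using w by (simp add: Dyck_def dyck_def)
qed

lemma flip_between: assumes "i \<in> V a" "below a c" "below c (flip a i)"
  shows "c = a \<or> c = flip a i"
proof -
  have v: "Suc i < length a" "a!i = D" "a!Suc i = U" using assms(1) by (auto simp: V_def)
  have l: "length c = length a" using assms(2) by (simp add: below_def)
  have eq: "\<forall>k\<le>length a. k \<noteq> Suc i \<longrightarrow> height c k = height a k"
  proof (intro allI impI)
    fix k assume k: "k \<le> length a" "k \<noteq> Suc i"
    have "height a k \<le> height c k" "height c k \<le> height (flip a i) k"
      using assms(2,3) k l by (auto simp: below_def)
    then show "height c k = height a k" using k by (simp add: height_flip[OF assms(1)])
  qed
  have hi: "height c i = height a i" using eq v by auto
  have ha: "height a (Suc i) = height a i - 1" using height_Suc[of i a] v by auto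
  have "height c (Suc i) = height a i + 1 \<or> height c (Suc i) = height a i - 1"
    using height_Suc[of i c] v l hi by auto
  then show ?thesis
  proof
    assume "height c (Suc i) = height a i + 1"
    then have "\<forall>k\<le>length c. height c k = height (flip a i) k"
      using eq l ha by (auto simp: height_flip[OF assms(1)])
    then show ?thesis using heights_eq[of c "flip a i"] l by auto
  next
    assume "height c (Suc i) = height a i - 1"
    then have "\<forall>k\<le>length c. height c k = height a k"
      using eq l ha by auto
    then show ?thesis using heights_eq[of c a] l by auto
  qed
qed

lemma exists_flip: assumes "a \<in> Dyck n" "b \<in> Dyck n" "strictly_below a b"
  shows "\<exists>i\<in>V a. below (flip a i) b"
proof -
  have l: "length a = length b" and le: "\<forall>k\<le>length a. height a k \<le> height b k" and ne: "a \<noteq> b"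
    using assms(3) by (auto simp: strictly_below_def below_def)
  have "\<exists>k\<le>length a. height a k < height b k"
  proof (rule ccontr)
    assume "\<not> ?thesis"
    then have "\<forall>k\<le>length a. height a k = height b k" using le by force
    then show False using heights_eq[OF l] ne by simp
  qed
  then obtain k0 where "k0 \<le> length a \<and> height a k0 < height b k0" by blast
  from ex_has_least_nat[where P="\<lambda>k. k \<le> length a \<and> height a k < height b k" and m="\<lambda>k. nat (height a k)", OF this]
  obtain k where k: "k \<le> length a" "height a k < height b k"
    and min: "\<And>k'. k' \<le> length a \<Longrightarrow> height a k' < height b k' \<Longrightarrow> nat (height a k) \<le> nat (height a k')" by blast
  have da: "dyck a" "dyck b" using assms by (auto simp: Dyck_def)
  have pos: "\<And>k. k \<le> length a \<Longrightarrow> 0 \<le> height a k" using da(1) by (simp add: dyck_def)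
  have k0: "k \<noteq> 0" using k by (cases k) auto
  have kl: "k \<noteq> length a"
  proof
    assume "k = length a" then show False using k da l by (simp add: dyck_def)
  qed
  obtain j where j: "k = Suc j" using k0 by (cases k) auto
  have jl: "Suc j < length a" using k kl j by simp
  have aj: "a!j = D"
  proof (rule ccontr)
    assume "a!j \<noteq> D" then have "a!j = U" by (cases "a!j") auto
    then have h1: "height a j = height a k - 1" using height_Suc[of j a] jl j by simp
    have "height b j \<ge> height b k - 1" using height_Suc[of j b] jl j l by (auto split: if_splits)
    then have "height a j < height b j" using h1 k by simp
    from min[of j] this jl have "nat (height a k) \<le> nat (height a j)" by simp
    then show False using h1 pos[of j] jl by simp
  qed
  have ak: "a!k = U"
  proof (rule ccontr)
    assume "a!k \<noteq> U" then have "a!k = D" by (cases "a!k") auto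
    then have h1: "height a (Suc k) = height a k - 1" using height_Suc[of k a] jl j by simp
    have "height b (Suc k) \<ge> height b k - 1" using height_Suc[of k b] jl j l by (auto split: if_splits)
    then have "height a (Suc k) < height b (Suc k)" using h1 k by simp
    from min[of "Suc k"] this jl j have "nat (height a k) \<le> nat (height a (Suc k))" by simp
    then show False using h1 pos[of "Suc k"] jl j by simp
  qed
  have jV: "j \<in> V a" using aj ak jl j by (simp add: V_def)
  have "below (flip a j) b"
    unfolding below_def using l le height_gap[OF l k] j by (auto simp: height_flip[OF jV])
  then show ?thesis using jV by blast
qed

lemma covers_iff: "covers n a b \<longleftrightarrow> a \<in> Dyck n \<and> (\<exists>i\<in>V a. b = flip a i)"
proof
  assume c: "covers n a b"
  then have a: "a \<in> Dyck n" "b \<in> Dyck n" "strictly_below a b" by (auto simp: covers_def)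
  obtain i where i: "i \<in> V a" "below (flip a i) b" using exists_flip[OF a] by blast
  have "b = flip a i"
  proof (rule ccontr)
    assume "b \<noteq> flip a i"
    then have "strictly_below (flip a i) b" using i by (simp add: strictly_below_def)
    moreover have "strictly_below a (flip a i)" using i flip_ne below_flip
      by (metis strictly_below_def)
    moreover have "flip a i \<in> Dyck n" using dyck_flip a i by blast
    ultimately show False using c by (auto simp: covers_def)
  qed
  then show "a \<in> Dyck n \<and> (\<exists>i\<in>V a. b = flip a i)" using a i by blast
next
  assume "a \<in> Dyck n \<and> (\<exists>i\<in>V a. b = flip a i)"
  then obtain i where a: "a \<in> Dyck n" "i \<in> V a" "b = flip a i" by blast
  have "\<not> (\<exists>c\<in>Dyck n. strictly_below a c \<and> strictly_below c b)"
    using flip_between[OF a(2)] a(3) by (auto simp: strictly_below_def)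
  then show "covers n a b" using a dyck_flip[OF a(1,2)] below_flip[OF a(2)] flip_ne[OF a(2)]
    by (auto simp: covers_def strictly_below_def)
qed




lemma flip_inj: assumes "i \<in> V w" "i' \<in> V w" "flip w i = flip w i'" shows "i = i'"
proof (rule ccontr)
  assume ne: "i \<noteq> i'"
  have "flip w i ! i = U" using assms(1) by (simp add: V_def nth_flip)
  moreover have "flip w i' ! i = D" using assms(1,2) ne by (auto simp: V_def nth_flip)
  ultimately show False using assms(3) by simp
qed

lemma finite_Dyck: "finite (Dyck n)"
proof -
  have u: "(UNIV :: step set) = {U, D}" using step.exhaust by blast
  have "Dyck n \<subseteq> {xs. set xs \<subseteq> {U,D} \<and> length xs = 2*n}" using u by (auto simp: Dyck_def)
  then show ?thesis by (rule finite_subset) (simp add: finite_lists_length_eq)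
qed

lemma finite_V: "finite (V w)"
  by (rule finite_subset[of _ "{..<length w}"]) (auto simp: V_def)

lemma sc3_sum: "sc3 n = (\<Sum>a\<in>Dyck n. \<Sum>i\<in>V a. \<Sum>j\<in>V (flip a i). card (V (flip (flip a i) j)))"
proof -
  define T where "T = (SIGMA a:Dyck n. SIGMA i:V a. SIGMA j:V (flip a i). V (flip (flip a i) j))"
  define \<phi> where "\<phi> = (\<lambda>(a,i,j,k). (a, flip a i, flip (flip a i) j, flip (flip (flip a i) j) k))"
  have Q: "{(a, b, c, d). covers n a b \<and> covers n b c \<and> covers n c d} = \<phi> ` T"
  proof (rule set_eqI, rule iffI)
    fix x assume "x \<in> {(a, b, c, d). covers n a b \<and> covers n b c \<and> covers n c d}"
    then obtain a b c d where x: "x = (a,b,c,d)" "covers n a b" "covers n b c" "covers n c d" by blast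
    then obtain i j k where "a \<in> Dyck n" "i \<in> V a" "b = flip a i" "j \<in> V b" "c = flip b j" "k \<in> V c" "d = flip c k"
      by (auto simp: covers_iff)
    then show "x \<in> \<phi> ` T" unfolding T_def \<phi>_def x by force
  next
    fix x assume "x \<in> \<phi> ` T"
    then obtain a i j k where "x = \<phi> (a,i,j,k)" "a \<in> Dyck n" "i \<in> V a" "j \<in> V (flip a i)" "k \<in> V (flip (flip a i) j)"
      by (auto simp: T_def)
    then show "x \<in> {(a, b, c, d). covers n a b \<and> covers n b c \<and> covers n c d}"
      by (auto simp: \<phi>_def covers_iff intro!: dyck_flip)
  qed
  have inj: "inj_on \<phi> T"
  proof (rule inj_onI)
    fix x y assume "x \<in> T" "y \<in> T" "\<phi> x = \<phi> y"
    then obtain a i j k i' j' k' where x: "x = (a,i,j,k)" "y = (a,i',j',k')"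
      "i \<in> V a" "j \<in> V (flip a i)" "k \<in> V (flip (flip a i) j)"
      "i' \<in> V a" "j' \<in> V (flip a i')" "k' \<in> V (flip (flip a i') j')"
      "flip a i = flip a i'" "flip (flip a i) j = flip (flip a i') j'"
      "flip (flip (flip a i) j) k = flip (flip (flip a i') j') k'"
      by (auto simp: T_def \<phi>_def)
    have "i = i'" using flip_inj x by blast
    moreover have "j = j'" using flip_inj x calculation by blast
    moreover have "k = k'" using flip_inj x calculation by blast
    ultimately show "x = y" using x by simp
  qed
  have "sc3 n = card T" unfolding sc3_def Q using card_image[OF inj] .
  also have "\<dots> = (\<Sum>a\<in>Dyck n. \<Sum>i\<in>V a. \<Sum>j\<in>V (flip a i). card (V (flip (flip a i) j)))"
    unfolding T_def by (simp add: finite_Dyck finite_V)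
  finally show ?thesis .
qed




lemma mset_fst_facts: assumes "finite S" "image_mset fst (mset_set S) = M"
  shows "card S = size M" "fst ` S = set_mset M"
proof -
  show "card S = size M" using arg_cong[OF assms(2), of size] by simp
  show "fst ` S = set_mset M" using arg_cong[OF assms(2), of set_mset] assms(1) by simp
qed

lemma num_occ_1: "num_occ [p] w = card (occ p w)"
proof -
  have "{S :: (path \<times> nat) set.
      finite S \<and> (\<forall>(v, i)\<in>S. i \<in> occ v w) \<and>
      image_mset fst (mset_set S) = mset [p] \<and>
      (\<forall>(v, i)\<in>S. \<forall>(v', i')\<in>S. (v, i) \<noteq> (v', i') \<longrightarrow>
          {i..<i + length v} \<inter> {i'..<i' + length v'} = {})} = (\<lambda>i. {(p,i)}) ` occ p w"
  proof (rule set_eqI, rule iffI)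
    fix S assume "S \<in> {S :: (path \<times> nat) set.
      finite S \<and> (\<forall>(v, i)\<in>S. i \<in> occ v w) \<and>
      image_mset fst (mset_set S) = mset [p] \<and>
      (\<forall>(v, i)\<in>S. \<forall>(v', i')\<in>S. (v, i) \<noteq> (v', i') \<longrightarrow>
          {i..<i + length v} \<inter> {i'..<i' + length v'} = {})}"
    then have S: "finite S" "\<forall>(v, i)\<in>S. i \<in> occ v w" "image_mset fst (mset_set S) = mset [p]" by auto
    from mset_fst_facts[OF S(1,3)] have "card S = 1" "fst ` S = {p}" by auto
    then obtain x where "S = {x}" "fst x = p" by (auto simp: card_1_singleton_iff)
    then show "S \<in> (\<lambda>i. {(p,i)}) ` occ p w" using S(2) by (cases x) auto
  next
    fix S assume "S \<in> (\<lambda>i. {(p,i)}) ` occ p w"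
    then show "S \<in> {S :: (path \<times> nat) set.
      finite S \<and> (\<forall>(v, i)\<in>S. i \<in> occ v w) \<and>
      image_mset fst (mset_set S) = mset [p] \<and>
      (\<forall>(v, i)\<in>S. \<forall>(v', i')\<in>S. (v, i) \<noteq> (v', i') \<longrightarrow>
          {i..<i + length v} \<inter> {i'..<i' + length v'} = {})}" by auto
  qed
  moreover have "inj_on (\<lambda>i. {(p,i)}) (occ p w)" by (rule inj_onI) auto
  ultimately show ?thesis unfolding num_occ_def by (simp add: card_image)
qed

lemma num_occ_2: assumes "p \<noteq> q"
  shows "num_occ [p,q] w = card {(i,j). i \<in> occ p w \<and> j \<in> occ q w \<and>
     {i..<i + length p} \<inter> {j..<j + length q} = {}}"
proof -
  define P where "P = {(i,j). i \<in> occ p w \<and> j \<in> occ q w \<and>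
     {i..<i + length p} \<inter> {j..<j + length q} = {}}"
  define f where "f = (\<lambda>(i::nat,j::nat). {(p,i),(q,j)})"
  have "{S :: (path \<times> nat) set.
      finite S \<and> (\<forall>(v, i)\<in>S. i \<in> occ v w) \<and>
      image_mset fst (mset_set S) = mset [p,q] \<and>
      (\<forall>(v, i)\<in>S. \<forall>(v', i')\<in>S. (v, i) \<noteq> (v', i') \<longrightarrow>
          {i..<i + length v} \<inter> {i'..<i' + length v'} = {})} = f ` P"
  proof (rule set_eqI, rule iffI)
    fix S assume "S \<in> {S :: (path \<times> nat) set.
      finite S \<and> (\<forall>(v, i)\<in>S. i \<in> occ v w) \<and>
      image_mset fst (mset_set S) = mset [p,q] \<and>
      (\<forall>(v, i)\<in>S. \<forall>(v', i')\<in>S. (v, i) \<noteq> (v', i') \<longrightarrow>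
          {i..<i + length v} \<inter> {i'..<i' + length v'} = {})}"
    then have S: "finite S" "\<forall>(v, i)\<in>S. i \<in> occ v w" "image_mset fst (mset_set S) = mset [p,q]"
      "\<forall>(v, i)\<in>S. \<forall>(v', i')\<in>S. (v, i) \<noteq> (v', i') \<longrightarrow>
          {i..<i + length v} \<inter> {i'..<i' + length v'} = {}" by auto
    from mset_fst_facts[OF S(1,3)] have c: "card S = 2" "fst ` S = {p,q}" by auto
    then obtain x y where xy: "S = {x,y}" "x \<noteq> y" by (auto simp: card_2_iff)
    then have "(fst x = p \<and> fst y = q) \<or> (fst x = q \<and> fst y = p)" using c assms by auto
    then obtain i j where S2: "S = {(p,i),(q,j)}"
    proof
      assume "fst x = p \<and> fst y = q"
      then have "S = {(p, snd x), (q, snd y)}" using xy(1) by (cases x; cases y) simp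
      then show ?thesis using that by blast
    next
      assume "fst x = q \<and> fst y = p"
      then have "S = {(p, snd y), (q, snd x)}" using xy(1) by (cases x; cases y) (simp add: insert_commute)
      then show ?thesis using that by blast
    qed
    have m: "(p,i) \<in> S" "(q,j) \<in> S" using S2 by auto
    have "i \<in> occ p w" using bspec[OF S(2) m(1)] by simp
    moreover have "j \<in> occ q w" using bspec[OF S(2) m(2)] by simp
    moreover have "{i..<i + length p} \<inter> {j..<j + length q} = {}"
    proof -
      have "\<forall>(v', i')\<in>S. (p, i) \<noteq> (v', i') \<longrightarrow> {i..<i + length p} \<inter> {i'..<i' + length v'} = {}"
        using bspec[OF S(4) m(1)] by simp
      from bspec[OF this m(2)] show ?thesis using assms by simp
    qed
    ultimately have "(i,j) \<in> P" by (simp add: P_def)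
    moreover have "S = f (i,j)" using S2 by (simp add: f_def)
    ultimately show "S \<in> f ` P" by (rule rev_image_eqI)
  next
    fix S assume "S \<in> f ` P"
    then obtain i j where S: "S = {(p,i),(q,j)}" "i \<in> occ p w" "j \<in> occ q w"
      "{i..<i + length p} \<inter> {j..<j + length q} = {}" by (auto simp: P_def f_def)
    have "mset_set S = {#(p,i),(q,j)#}" using S(1) assms by simp
    then show "S \<in> {S :: (path \<times> nat) set.
      finite S \<and> (\<forall>(v, i)\<in>S. i \<in> occ v w) \<and>
      image_mset fst (mset_set S) = mset [p,q] \<and>
      (\<forall>(v, i)\<in>S. \<forall>(v', i')\<in>S. (v, i) \<noteq> (v', i') \<longrightarrow>
          {i..<i + length v} \<inter> {i'..<i' + length v'} = {})}"
    proof (intro CollectI conjI)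
      show "finite S" using S(1) by simp
      show "\<forall>(v, i)\<in>S. i \<in> occ v w" using S(1-3) by simp
      show "image_mset fst (mset_set S) = mset [p,q]" using \<open>mset_set S = _\<close> by simp
      show "\<forall>(v, i)\<in>S. \<forall>(v', i')\<in>S. (v, i) \<noteq> (v', i') \<longrightarrow>
          {i..<i + length v} \<inter> {i'..<i' + length v'} = {}"
        using S(1,4) by (simp add: Int_commute) blast
    qed
  qed
  moreover have "inj_on f P"
  proof (rule inj_onI)
    fix x y assume "x \<in> P" "y \<in> P" "f x = f y"
    obtain i j i' j' where xy: "x = (i,j)" "y = (i',j')" by (cases x, cases y) auto
    have e: "{(p,i),(q,j)} = {(p,i'),(q,j')}" using \<open>f x = f y\<close> xy by (simp add: f_def)
    have "(p,i) \<in> {(p,i'),(q,j')}" using e by blast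
    then have "i = i'" using assms by auto
    moreover have "(q,j) \<in> {(p,i'),(q,j')}" using e by blast
    then have "j = j'" using assms by auto
    ultimately show "x = y" using xy by simp
  qed
  ultimately show ?thesis unfolding num_occ_def P_def[symmetric] by (simp add: card_image)
qed

lemma num_occ_3: assumes fin: "finite (occ q w)"
  and nov: "\<forall>i\<in>occ q w. \<forall>j\<in>occ q w. i \<noteq> j \<longrightarrow> {i..<i + length q} \<inter> {j..<j + length q} = {}"
  shows "num_occ [q,q,q] w = card (occ q w) choose 3"
proof -
  define f where "f = (\<lambda>I::nat set. Pair q ` I)"
  have "{S :: (path \<times> nat) set.
      finite S \<and> (\<forall>(v, i)\<in>S. i \<in> occ v w) \<and>
      image_mset fst (mset_set S) = mset [q,q,q] \<and>
      (\<forall>(v, i)\<in>S. \<forall>(v', i')\<in>S. (v, i) \<noteq> (v', i') \<longrightarrow>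
          {i..<i + length v} \<inter> {i'..<i' + length v'} = {})} = f ` {I. I \<subseteq> occ q w \<and> card I = 3}"
  proof (rule set_eqI, rule iffI)
    fix S assume "S \<in> {S :: (path \<times> nat) set.
      finite S \<and> (\<forall>(v, i)\<in>S. i \<in> occ v w) \<and>
      image_mset fst (mset_set S) = mset [q,q,q] \<and>
      (\<forall>(v, i)\<in>S. \<forall>(v', i')\<in>S. (v, i) \<noteq> (v', i') \<longrightarrow>
          {i..<i + length v} \<inter> {i'..<i' + length v'} = {})}"
    then have S: "finite S" "\<forall>(v, i)\<in>S. i \<in> occ v w" "image_mset fst (mset_set S) = mset [q,q,q]" by auto
    from mset_fst_facts[OF S(1,3)] have c: "card S = 3" "fst ` S = {q}" by auto
    have fq: "\<And>x. x \<in> S \<Longrightarrow> fst x = q" using c(2) by auto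
    have "Pair q ` snd ` S = (\<lambda>x. x) ` S" unfolding image_image
      by (rule image_cong) (auto simp: prod_eq_iff fq)
    then have Seq: "S = f (snd ` S)" unfolding f_def by simp
    have "inj_on snd S"
    proof (rule inj_onI)
      fix x y assume "x \<in> S" "y \<in> S" "snd x = snd y"
      moreover have "fst x = q" "fst y = q" using c(2) \<open>x \<in> S\<close> \<open>y \<in> S\<close> by auto
      ultimately show "x = y" by (simp add: prod_eq_iff)
    qed
    then have "card (snd ` S) = 3" using c(1) by (simp add: card_image)
    moreover have "snd ` S \<subseteq> occ q w"
    proof
      fix i assume "i \<in> snd ` S"
      then obtain x where x: "x \<in> S" "i = snd x" by blast
      then have "x = (q, i)" using fq[OF x(1)] by (simp add: prod_eq_iff)
      then show "i \<in> occ q w" using S(2) x(1) by auto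
    qed
    ultimately have "snd ` S \<in> {I. I \<subseteq> occ q w \<and> card I = 3}" by simp
    then show "S \<in> f ` {I. I \<subseteq> occ q w \<and> card I = 3}" using Seq by (rule rev_image_eqI)
  next
    fix S assume "S \<in> f ` {I. I \<subseteq> occ q w \<and> card I = 3}"
    then obtain I where I: "S = Pair q ` I" "I \<subseteq> occ q w" "card I = 3" by (auto simp: f_def)
    have fI: "finite I" using I(3) by (metis card.infinite zero_neq_numeral)
    have inj: "inj_on (Pair q) I" by (rule inj_onI) auto
    have "image_mset fst (mset_set S) = image_mset fst (image_mset (Pair q) (mset_set I))"
      using I(1) image_mset_mset_set[OF inj] by simp
    also have "\<dots> = replicate_mset 3 q" using I(3) fI by (simp add: multiset.map_comp comp_def image_mset_const_eq)
    also have "\<dots> = mset [q,q,q]" by (simp add: numeral_3_eq_3)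
    finally have m: "image_mset fst (mset_set S) = mset [q,q,q]" .
    show "S \<in> {S :: (path \<times> nat) set.
      finite S \<and> (\<forall>(v, i)\<in>S. i \<in> occ v w) \<and>
      image_mset fst (mset_set S) = mset [q,q,q] \<and>
      (\<forall>(v, i)\<in>S. \<forall>(v', i')\<in>S. (v, i) \<noteq> (v', i') \<longrightarrow>
          {i..<i + length v} \<inter> {i'..<i' + length v'} = {})}"
    proof (intro CollectI conjI)
      show "finite S" using I(1) fI by simp
      show "\<forall>(v, i)\<in>S. i \<in> occ v w" using I(1,2) by auto
      show "image_mset fst (mset_set S) = mset [q,q,q]" by (rule m)
      show "\<forall>(v, i)\<in>S. \<forall>(v', i')\<in>S. (v, i) \<noteq> (v', i') \<longrightarrow>
          {i..<i + length v} \<inter> {i'..<i' + length v'} = {}"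
      proof -
        have "\<And>i j. i \<in> I \<Longrightarrow> j \<in> I \<Longrightarrow> i \<noteq> j \<Longrightarrow> {i..<i+length q} \<inter> {j..<j+length q} = {}"
          using nov I(2) by blast
        then show ?thesis using I(1) by auto
      qed
    qed
  qed
  moreover have "inj_on f {I. I \<subseteq> occ q w \<and> card I = 3}"
    unfolding f_def
  proof (rule inj_onI)
    fix I J assume "Pair q ` I = Pair q ` J"
    then have "snd ` Pair q ` I = snd ` Pair q ` J" by simp
    then show "I = J" by (simp add: image_image)
  qed
  ultimately show ?thesis unfolding num_occ_def by (simp add: card_image n_subsets fin)
qed




lemma occ_mem: "i \<in> occ v w \<longleftrightarrow> i + length v \<le> length w \<and> (\<forall>t<length v. w!(i+t) = v!t)"
proof -
  have "i + length v \<le> length w \<Longrightarrow> take (length v) (drop i w) = v \<longleftrightarrow> (\<forall>t<length v. w!(i+t) = v!t)"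
    by (simp add: list_eq_iff_nth_eq)
  then show ?thesis by (auto simp: occ_def)
qed

lemma occ_DU: "occ [D,U] w = V w"
  by (auto simp: occ_mem V_def less_Suc_eq numeral_2_eq_2)

lemma occ_DDU: "j \<in> occ [D,D,U] w \<longleftrightarrow> Suc (Suc j) < length w \<and> w!j = D \<and> w!Suc j = D \<and> w!Suc(Suc j) = U"
  by (auto simp: occ_mem less_Suc_eq numeral_3_eq_3)
lemma occ_DUU: "j \<in> occ [D,U,U] w \<longleftrightarrow> Suc (Suc j) < length w \<and> w!j = D \<and> w!Suc j = U \<and> w!Suc(Suc j) = U"
  by (auto simp: occ_mem less_Suc_eq numeral_3_eq_3)
lemma occ_DDDU: "j \<in> occ [D,D,D,U] w \<longleftrightarrow> Suc (Suc (Suc j)) < length w \<and> w!j = D \<and> w!Suc j = D \<and> w!Suc(Suc j) = D \<and> w!Suc(Suc(Suc j)) = U"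
  by (auto simp: occ_mem less_Suc_eq eval_nat_numeral)
lemma occ_DUUU: "j \<in> occ [D,U,U,U] w \<longleftrightarrow> Suc (Suc (Suc j)) < length w \<and> w!j = D \<and> w!Suc j = U \<and> w!Suc(Suc j) = U \<and> w!Suc(Suc(Suc j)) = U"
  by (auto simp: occ_mem less_Suc_eq eval_nat_numeral)
lemma occ_DDUU: "j \<in> occ [D,D,U,U] w \<longleftrightarrow> Suc (Suc (Suc j)) < length w \<and> w!j = D \<and> w!Suc j = D \<and> w!Suc(Suc j) = U \<and> w!Suc(Suc(Suc j)) = U"
  by (auto simp: occ_mem less_Suc_eq eval_nat_numeral)
lemma occ_DUDU: "j \<in> occ [D,U,D,U] w \<longleftrightarrow> Suc (Suc (Suc j)) < length w \<and> w!j = D \<and> w!Suc j = U \<and> w!Suc(Suc j) = D \<and> w!Suc(Suc(Suc j)) = U"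
  by (auto simp: occ_mem less_Suc_eq eval_nat_numeral)

lemma V_flip: assumes "i \<in> V w"
  shows "V (flip w i) = (V w - {i}) \<union> (if 0 < i \<and> w!(i-1) = D then {i-1} else {})
     \<union> (if Suc (Suc i) < length w \<and> w!Suc (Suc i) = U then {Suc i} else {})" (is "?L = ?R")
proof (rule set_eqI)
  fix j
  have v: "Suc i < length w" "w!i = D" "w!Suc i = U" using assms by (auto simp: V_def)
  consider "Suc (Suc j) < i" | "Suc (Suc j) = i" | "Suc j = i" | "j = i" | "j = Suc i" | "Suc i < j" by linarith
  then show "j \<in> ?L \<longleftrightarrow> j \<in> ?R"
  proof cases
    case 1 then show ?thesis using v by (auto simp: V_def  nth_flip)
  next
    case 2 then show ?thesis using v by (auto simp: V_def  nth_flip)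
  next
    case 3 then show ?thesis using v by (auto simp: V_def  nth_flip)
  next
    case 4 then show ?thesis using v by (auto simp: V_def  nth_flip)
  next
    case 5 then show ?thesis using v by (auto simp: V_def  nth_flip)
  next
    case 6 then show ?thesis using v by (auto simp: V_def  nth_flip)
  qed
qed

lemma DDU_flip: assumes "i \<in> V w"
  shows "occ [D,D,U] (flip w i) = (occ [D,D,U] w - {i-1})
     \<union> (if 2 \<le> i \<and> w!(i-2) = D \<and> w!(i-1) = D then {i-2} else {})
     \<union> (if Suc (Suc (Suc i)) < length w \<and> w!Suc (Suc i) = D \<and> w!Suc(Suc(Suc i)) = U then {Suc i} else {})" (is "?L = ?R")
proof (rule set_eqI)
  fix j
  have v: "Suc i < length w" "w!i = D" "w!Suc i = U" using assms by (auto simp: V_def)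
  consider "Suc (Suc j) < i" | "Suc (Suc j) = i" | "Suc j = i" | "j = i" | "j = Suc i" | "Suc i < j" by linarith
  then show "j \<in> ?L \<longleftrightarrow> j \<in> ?R"
  proof cases
    case 1 then show ?thesis using v by (auto simp: V_def occ_DDU nth_flip)
  next
    case 2 then show ?thesis using v by (auto simp: V_def occ_DDU nth_flip)
  next
    case 3 then show ?thesis using v by (auto simp: V_def occ_DDU nth_flip)
  next
    case 4 then show ?thesis using v by (auto simp: V_def occ_DDU nth_flip)
  next
    case 5 then show ?thesis using v by (auto simp: V_def occ_DDU nth_flip)
  next
    case 6 then show ?thesis using v by (auto simp: V_def occ_DDU nth_flip)
  qed
qed

lemma DUU_flip: assumes "i \<in> V w"
  shows "occ [D,U,U] (flip w i) = (occ [D,U,U] w - {i})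
     \<union> (if 2 \<le> i \<and> w!(i-2) = D \<and> w!(i-1) = U then {i-2} else {})
     \<union> (if Suc (Suc (Suc i)) < length w \<and> w!Suc (Suc i) = U \<and> w!Suc(Suc(Suc i)) = U then {Suc i} else {})" (is "?L = ?R")
proof (rule set_eqI)
  fix j
  have v: "Suc i < length w" "w!i = D" "w!Suc i = U" using assms by (auto simp: V_def)
  consider "Suc (Suc j) < i" | "Suc (Suc j) = i" | "Suc j = i" | "j = i" | "j = Suc i" | "Suc i < j" by linarith
  then show "j \<in> ?L \<longleftrightarrow> j \<in> ?R"
  proof cases
    case 1 then show ?thesis using v by (auto simp: V_def occ_DUU nth_flip)
  next
    case 2 then show ?thesis using v by (auto simp: V_def occ_DUU nth_flip)
  next
    case 3 then show ?thesis using v by (auto simp: V_def occ_DUU nth_flip)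
  next
    case 4 then show ?thesis using v by (auto simp: V_def occ_DUU nth_flip)
  next
    case 5 then show ?thesis using v by (auto simp: V_def occ_DUU nth_flip)
  next
    case 6 then show ?thesis using v by (auto simp: V_def occ_DUU nth_flip)
  qed
qed




lemma finite_occ: "finite (occ v w)"
  by (rule finite_subset[of _ "{..length w}"]) (auto simp: occ_def)

lemma card_V_flip: assumes "i \<in> V w"
  shows "int (card (V (flip w i))) = int (card (V w)) - 1 + of_bool (0 < i \<and> w!(i-1) = D)
     + of_bool (Suc (Suc i) < length w \<and> w!Suc (Suc i) = U)"
proof -
  have v: "Suc i < length w" "w!i = D" "w!Suc i = U" using assms by (auto simp: V_def)
  have n1: "0 < i \<Longrightarrow> i - 1 \<notin> V w" using v by (auto simp: V_def)
  have n2: "Suc i \<notin> V w" using v by (auto simp: V_def)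
  have c: "card (V w - {i}) = card (V w) - 1" "card (V w) \<ge> 1" using assms finite_V
    by (auto simp: card_Diff_singleton Suc_le_eq card_gt_0_iff)
  show ?thesis unfolding V_flip[OF assms]
    using n1 n2 c finite_V[of w]
    by (cases "0 < i \<and> w!(i-1) = D"; cases "Suc (Suc i) < length w \<and> w!Suc (Suc i) = U")
       (auto simp: card_insert_if of_nat_diff)
qed

lemma card_DDU_flip: assumes "i \<in> V w"
  shows "int (card (occ [D,D,U] (flip w i))) = int (card (occ [D,D,U] w)) - of_bool (0 < i \<and> w!(i-1) = D)
     + of_bool (2 \<le> i \<and> w!(i-2) = D \<and> w!(i-1) = D)
     + of_bool (Suc (Suc (Suc i)) < length w \<and> w!Suc (Suc i) = D \<and> w!Suc(Suc(Suc i)) = U)"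
proof -
  have v: "Suc i < length w" "w!i = D" "w!Suc i = U" using assms by (auto simp: V_def)
  have m: "i - 1 \<in> occ [D,D,U] w \<longleftrightarrow> (0 < i \<and> w!(i-1) = D)"
    using v by (cases i) (auto simp: occ_DDU)
  have n1: "2 \<le> i \<Longrightarrow> i - 2 \<notin> occ [D,D,U] w"
  proof
    assume a: "2 \<le> i" "i - 2 \<in> occ [D,D,U] w"
    then have "w!Suc(Suc(i-2)) = U" by (simp add: occ_DDU)
    moreover have "Suc(Suc(i-2)) = i" using a(1) by simp
    ultimately show False using v by simp
  qed
  have n2: "Suc i \<notin> occ [D,D,U] w" using v by (auto simp: occ_DDU)
  have c: "card (occ [D,D,U] w - {i-1}) = card (occ [D,D,U] w) - of_bool (0 < i \<and> w!(i-1) = D)"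
    using m finite_occ by (auto simp: card_Diff_singleton)
  have c2: "of_bool (0 < i \<and> w!(i-1) = D) \<le> card (occ [D,D,U] w)"
    using m finite_occ[of "[D,D,U]" w] by (auto simp: card_gt_0_iff Suc_le_eq)
  have c3: "card (occ [D,D,U] w - {i-1} \<union> (if 2 \<le> i \<and> w!(i-2) = D \<and> w!(i-1) = D then {i-2} else {})
     \<union> (if Suc (Suc (Suc i)) < length w \<and> w!Suc (Suc i) = D \<and> w!Suc(Suc(Suc i)) = U then {Suc i} else {}))
     = card (occ [D,D,U] w - {i-1}) + of_bool (2 \<le> i \<and> w!(i-2) = D \<and> w!(i-1) = D)
     + of_bool (Suc (Suc (Suc i)) < length w \<and> w!Suc (Suc i) = D \<and> w!Suc(Suc(Suc i)) = U)"
    using n1 n2 finite_occ[of "[D,D,U]" w]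
    by (cases "2 \<le> i \<and> w!(i-2) = D \<and> w!(i-1) = D";
        cases "Suc (Suc (Suc i)) < length w \<and> w!Suc (Suc i) = D \<and> w!Suc(Suc(Suc i)) = U")
       (auto simp: card_insert_if)
  show ?thesis unfolding DDU_flip[OF assms] c3 c using c2 by (simp add: of_nat_diff)
qed

lemma card_DUU_flip: assumes "i \<in> V w"
  shows "int (card (occ [D,U,U] (flip w i))) = int (card (occ [D,U,U] w)) - of_bool (Suc (Suc i) < length w \<and> w!Suc (Suc i) = U)
     + of_bool (2 \<le> i \<and> w!(i-2) = D \<and> w!(i-1) = U)
     + of_bool (Suc (Suc (Suc i)) < length w \<and> w!Suc (Suc i) = U \<and> w!Suc(Suc(Suc i)) = U)"
proof -
  have v: "Suc i < length w" "w!i = D" "w!Suc i = U" using assms by (auto simp: V_def)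
  have m: "i \<in> occ [D,U,U] w \<longleftrightarrow> (Suc (Suc i) < length w \<and> w!Suc (Suc i) = U)"
    using v by (auto simp: occ_DUU)
  have n1: "2 \<le> i \<Longrightarrow> i - 2 \<notin> occ [D,U,U] w"
  proof
    assume a: "2 \<le> i" "i - 2 \<in> occ [D,U,U] w"
    then have "w!Suc(Suc(i-2)) = U" by (simp add: occ_DUU)
    moreover have "Suc(Suc(i-2)) = i" using a(1) by simp
    ultimately show False using v by simp
  qed
  have n2: "Suc i \<notin> occ [D,U,U] w" using v by (auto simp: occ_DUU)
  have c: "card (occ [D,U,U] w - {i}) = card (occ [D,U,U] w) - of_bool (Suc (Suc i) < length w \<and> w!Suc (Suc i) = U)"
    using m finite_occ by (auto simp: card_Diff_singleton)
  have c2: "of_bool (Suc (Suc i) < length w \<and> w!Suc (Suc i) = U) \<le> card (occ [D,U,U] w)"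
    using m finite_occ[of "[D,U,U]" w] by (auto simp: card_gt_0_iff Suc_le_eq)
  have c3: "card (occ [D,U,U] w - {i} \<union> (if 2 \<le> i \<and> w!(i-2) = D \<and> w!(i-1) = U then {i-2} else {})
     \<union> (if Suc (Suc (Suc i)) < length w \<and> w!Suc (Suc i) = U \<and> w!Suc(Suc(Suc i)) = U then {Suc i} else {}))
     = card (occ [D,U,U] w - {i}) + of_bool (2 \<le> i \<and> w!(i-2) = D \<and> w!(i-1) = U)
     + of_bool (Suc (Suc (Suc i)) < length w \<and> w!Suc (Suc i) = U \<and> w!Suc(Suc(Suc i)) = U)"
    using n1 n2 finite_occ[of "[D,U,U]" w]
    by (cases "2 \<le> i \<and> w!(i-2) = D \<and> w!(i-1) = U";
        cases "Suc (Suc (Suc i)) < length w \<and> w!Suc (Suc i) = U \<and> w!Suc(Suc(Suc i)) = U")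
       (auto simp: card_insert_if)
  show ?thesis unfolding DUU_flip[OF assms] c3 c using c2 by (simp add: of_nat_diff)
qed




lemma shift_card: assumes "\<And>x. x \<in> A \<Longrightarrow> k \<le> x \<and> x - k \<in> B" "\<And>y. y \<in> B \<Longrightarrow> y + k \<in> A"
  shows "card A = card (B::nat set)"
proof -
  have "A = (\<lambda>y. y + k) ` B"
  proof (rule set_eqI, rule iffI)
    fix x assume "x \<in> A" then have "k \<le> x" "x - k \<in> B" using assms(1) by auto
    then show "x \<in> (\<lambda>y. y + k) ` B" by (intro rev_image_eqI[of "x - k"]) auto
  qed (use assms(2) in auto)
  moreover have "inj_on (\<lambda>y. y + k) B" by (rule inj_onI) simp
  ultimately show ?thesis by (simp add: card_image)
qed

lemma sub2a: "Suc (Suc 0) \<le> x \<Longrightarrow> Suc (x - Suc (Suc 0)) = x - 1" by simp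
lemma sub2b: "Suc (Suc 0) \<le> x \<Longrightarrow> Suc (Suc (x - Suc (Suc 0))) = x" by simp

lemma cL: "card (V w \<inter> {i. 0 < i \<and> w!(i-1) = D}) = card (occ [D,D,U] w)"
  by (rule shift_card[where k=1]) (auto simp: V_def occ_DDU)
lemma cR: "card (V w \<inter> {i. Suc (Suc i) < length w \<and> w!Suc (Suc i) = U}) = card (occ [D,U,U] w)"
  by (rule shift_card[where k=0]) (auto simp: V_def occ_DUU)
lemma cLR: "card (V w \<inter> {i. (0 < i \<and> w!(i-1) = D) \<and> (Suc (Suc i) < length w \<and> w!Suc (Suc i) = U)}) = card (occ [D,D,U,U] w)"
  by (rule shift_card[where k=1]) (auto simp: V_def occ_DDUU)
lemma cP: "card (V w \<inter> {i. 2 \<le> i \<and> w!(i-2) = D \<and> w!(i-1) = D}) = card (occ [D,D,D,U] w)"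
  by (rule shift_card[where k=2]) (auto simp: V_def occ_DDDU numeral_2_eq_2 sub2a sub2b)
lemma cQ: "card (V w \<inter> {i. Suc (Suc (Suc i)) < length w \<and> w!Suc (Suc i) = D \<and> w!Suc(Suc(Suc i)) = U}) = card (occ [D,U,D,U] w)"
  by (rule shift_card[where k=0]) (auto simp: V_def occ_DUDU)
lemma cS: "card (V w \<inter> {i. 2 \<le> i \<and> w!(i-2) = D \<and> w!(i-1) = U}) = card (occ [D,U,D,U] w)"
  by (rule shift_card[where k=2]) (auto simp: V_def occ_DUDU numeral_2_eq_2 sub2a sub2b)
lemma cT: "card (V w \<inter> {i. Suc (Suc (Suc i)) < length w \<and> w!Suc (Suc i) = U \<and> w!Suc(Suc(Suc i)) = U}) = card (occ [D,U,U,U] w)"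
  by (rule shift_card[where k=0]) (auto simp: V_def occ_DUUU)




lemma g_lemma: "int (\<Sum>j\<in>V u. card (V (flip u j))) =
   int (card (V u)) * (int (card (V u)) - 1) + int (card (occ [D,D,U] u)) + int (card (occ [D,U,U] u))"
proof -
  have "int (\<Sum>j\<in>V u. card (V (flip u j))) = (\<Sum>j\<in>V u. int (card (V (flip u j))))" by simp
  also have "\<dots> = (\<Sum>j\<in>V u. (int (card (V u)) - 1) + of_bool (0 < j \<and> u!(j-1) = D)
     + of_bool (Suc (Suc j) < length u \<and> u!Suc (Suc j) = U))"
    by (rule sum.cong) (simp_all add: card_V_flip)
  also have "\<dots> = int (card (V u)) * (int (card (V u)) - 1) + (\<Sum>j\<in>V u. of_bool (0 < j \<and> u!(j-1) = D))
     + (\<Sum>j\<in>V u. of_bool (Suc (Suc j) < length u \<and> u!Suc (Suc j) = U))"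
    by (simp only: sum.distrib) simp
  also have "\<dots> = int (card (V u)) * (int (card (V u)) - 1) + int (card (occ [D,D,U] u)) + int (card (occ [D,U,U] u))"
    using cL[of u] cR[of u] finite_V[of u] by simp
  finally show ?thesis .
qed

lemma f_lemma: "int (\<Sum>i\<in>V w. \<Sum>j\<in>V (flip w i). card (V (flip (flip w i) j))) =
   int (card (V w)) * (int (card (V w)) - 1) * (int (card (V w)) - 2)
   + 3 * (int (card (V w)) - 1) * int (card (occ [D,D,U] w))
   + 3 * (int (card (V w)) - 1) * int (card (occ [D,U,U] w))
   + int (card (occ [D,D,D,U] w)) + int (card (occ [D,U,U,U] w))
   + 2 * int (card (occ [D,D,U,U] w)) + 2 * int (card (occ [D,U,D,U] w))"
proof -
  define v where "v = int (card (V w))"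
  define a where "a = int (card (occ [D,D,U] w))"
  define b where "b = int (card (occ [D,U,U] w))"
  define L where "L = (\<lambda>i. of_bool (0 < i \<and> w!(i-1) = D) :: int)"
  define R where "R = (\<lambda>i. of_bool (Suc (Suc i) < length w \<and> w!Suc (Suc i) = U) :: int)"
  define LR where "LR = (\<lambda>i. of_bool ((0 < i \<and> w!(i-1) = D) \<and> (Suc (Suc i) < length w \<and> w!Suc (Suc i) = U)) :: int)"
  define P where "P = (\<lambda>i. of_bool (2 \<le> i \<and> w!(i-2) = D \<and> w!(i-1) = D) :: int)"
  define Q where "Q = (\<lambda>i. of_bool (Suc (Suc (Suc i)) < length w \<and> w!Suc (Suc i) = D \<and> w!Suc(Suc(Suc i)) = U) :: int)"
  define S where "S = (\<lambda>i. of_bool (2 \<le> i \<and> w!(i-2) = D \<and> w!(i-1) = U) :: int)"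
  define T where "T = (\<lambda>i. of_bool (Suc (Suc (Suc i)) < length w \<and> w!Suc (Suc i) = U \<and> w!Suc(Suc(Suc i)) = U) :: int)"
  have fin: "finite (V w)" by (rule finite_V)
  have sL: "(\<Sum>i\<in>V w. L i) = a" unfolding L_def a_def using cL[of w] fin by simp
  have sR: "(\<Sum>i\<in>V w. R i) = b" unfolding R_def b_def using cR[of w] fin by simp
  have sLR: "(\<Sum>i\<in>V w. LR i) = int (card (occ [D,D,U,U] w))" unfolding LR_def using cLR[of w] fin by simp
  have sP: "(\<Sum>i\<in>V w. P i) = int (card (occ [D,D,D,U] w))" unfolding P_def using cP[of w] fin by simp
  have sQ: "(\<Sum>i\<in>V w. Q i) = int (card (occ [D,U,D,U] w))" unfolding Q_def using cQ[of w] fin by simp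
  have sS: "(\<Sum>i\<in>V w. S i) = int (card (occ [D,U,D,U] w))" unfolding S_def using cS[of w] fin by simp
  have sT: "(\<Sum>i\<in>V w. T i) = int (card (occ [D,U,U,U] w))" unfolding T_def using cT[of w] fin by simp
  have pt: "int (\<Sum>j\<in>V (flip w i). card (V (flip (flip w i) j))) =
      (v - 1) * (v - 2) + a + b + (2 * v - 3) * L i + (2 * v - 3) * R i + 2 * LR i + P i + Q i + S i + T i"
    if i: "i \<in> V w" for i
  proof -
    have "int (\<Sum>j\<in>V (flip w i). card (V (flip (flip w i) j))) =
      (v - 1 + L i + R i) * (v - 1 + L i + R i - 1) + (a - L i + P i + Q i) + (b - R i + S i + T i)"
      unfolding g_lemma card_V_flip[OF i] card_DDU_flip[OF i] card_DUU_flip[OF i]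
      by (simp add: v_def a_def b_def L_def R_def P_def Q_def S_def T_def)
    also have "\<dots> = (v - 1) * (v - 2) + a + b + (2 * v - 3) * L i + (2 * v - 3) * R i + 2 * LR i + P i + Q i + S i + T i"
      unfolding L_def R_def LR_def
      by (cases "0 < i \<and> w!(i-1) = D"; cases "Suc (Suc i) < length w \<and> w!Suc (Suc i) = U") (simp_all add: algebra_simps)
    finally show ?thesis .
  qed
  have "int (\<Sum>i\<in>V w. \<Sum>j\<in>V (flip w i). card (V (flip (flip w i) j)))
      = (\<Sum>i\<in>V w. int (\<Sum>j\<in>V (flip w i). card (V (flip (flip w i) j))))" by simp
  also have "\<dots> = (\<Sum>i\<in>V w. (v - 1) * (v - 2) + a + b + (2 * v - 3) * L i + (2 * v - 3) * R i + 2 * LR i + P i + Q i + S i + T i)"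
    by (intro sum.cong refl pt)
  also have "\<dots> = v * ((v - 1) * (v - 2) + a + b) + (2 * v - 3) * (\<Sum>i\<in>V w. L i) + (2 * v - 3) * (\<Sum>i\<in>V w. R i)
     + 2 * (\<Sum>i\<in>V w. LR i) + (\<Sum>i\<in>V w. P i) + (\<Sum>i\<in>V w. Q i) + (\<Sum>i\<in>V w. S i) + (\<Sum>i\<in>V w. T i)"
    by (simp add: sum.distrib sum_distrib_left v_def)
  also have "\<dots> = v * ((v - 1) * (v - 2) + a + b) + (2 * v - 3) * a + (2 * v - 3) * b
     + 2 * int (card (occ [D,D,U,U] w)) + int (card (occ [D,D,D,U] w)) + 2 * int (card (occ [D,U,D,U] w))
     + int (card (occ [D,U,U,U] w))"
    unfolding sL sR sLR sP sQ sS sT by simp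
  finally show ?thesis unfolding v_def[symmetric] a_def[symmetric] b_def[symmetric]
    by (simp add: algebra_simps)
qed




lemma ivl_disj: "({i..<i+m} \<inter> {j..<j+(n::nat)} = {}) \<longleftrightarrow> (m = 0 \<or> n = 0 \<or> i+m \<le> j \<or> j+n \<le> i)"
proof
  assume e: "{i..<i+m} \<inter> {j..<j+n} = {}"
  show "m = 0 \<or> n = 0 \<or> i+m \<le> j \<or> j+n \<le> i"
  proof (rule ccontr)
    assume "\<not> ?thesis"
    then have "max i j \<in> {i..<i+m} \<inter> {j..<j+n}" by auto
    then show False using e by blast
  qed
qed auto

lemma choose2: "2 * int (n choose 2) = int n * (int n - 1)"
proof (induction n)
  case 0 then show ?case by simp
next
  case (Suc n)
  have "Suc n choose 2 = n + (n choose 2)"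
    using binomial_Suc_Suc[of n 1] by (simp add: numeral_2_eq_2)
  then show ?case using Suc by (simp add: algebra_simps)
qed

lemma choose3: "6 * int (n choose 3) = int n * (int n - 1) * (int n - 2)"
proof (induction n)
  case 0 then show ?case by simp
next
  case (Suc n)
  have "Suc n choose 3 = (n choose 2) + (n choose 3)"
    using binomial_Suc_Suc[of n 2] by (simp add: numeral_3_eq_3 numeral_2_eq_2)
  then show ?case using Suc choose2[of n] by (simp add: algebra_simps)
qed

lemma N3: "num_occ [[D,U],[D,U],[D,U]] w = card (V w) choose 3"
proof -
  have "num_occ [[D,U],[D,U],[D,U]] w = card (occ [D,U] w) choose 3"
  proof (rule num_occ_3)
    show "finite (occ [D,U] w)" by (rule finite_occ)
    show "\<forall>i\<in>occ [D,U] w. \<forall>j\<in>occ [D,U] w. i \<noteq> j \<longrightarrow> {i..<i + length [D,U]} \<inter> {j..<j + length [D,U]} = {}"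
    proof (intro ballI impI)
      fix i j assume ij: "i \<in> occ [D,U] w" "j \<in> occ [D,U] w" "i \<noteq> j"
      have "i \<noteq> Suc j" "j \<noteq> Suc i" using ij by (auto simp: occ_DU V_def)
      then have "i + 2 \<le> j \<or> j + 2 \<le> i" using ij(3) by linarith
      then show "{i..<i + length [D,U]} \<inter> {j..<j + length [D,U]} = {}"
        by (simp only: ivl_disj) simp
    qed
  qed
  then show ?thesis by (simp add: occ_DU)
qed

lemma N_DDU: "int (num_occ [[D,U],[D,D,U]] w) = int (card (V w)) * int (card (occ [D,D,U] w)) - int (card (occ [D,D,U] w))"
proof -
  define B where "B = occ [D,D,U] w"
  have key: "({i..<i + length [D,U]} \<inter> {j..<j + length [D,D,U]} = {}) \<longleftrightarrow> i \<noteq> Suc j"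
    if "i \<in> V w" "j \<in> B" for i j
  proof -
    have v: "Suc i < length w" "w!i = D" "w!Suc i = U" using that by (auto simp: V_def)
    have b: "Suc (Suc j) < length w" "w!j = D" "w!Suc j = D" "w!Suc(Suc j) = U" using that by (auto simp: B_def occ_DDU)
    have "i \<noteq> j" "Suc i \<noteq> j" "i \<noteq> Suc (Suc j)" using v b by auto
    then show ?thesis by (auto simp: ivl_disj numeral_2_eq_2 numeral_3_eq_3)
  qed
  have X: "{(i,j). i \<in> occ [D,U] w \<and> j \<in> occ [D,D,U] w \<and>
     {i..<i + length [D,U]} \<inter> {j..<j + length [D,D,U]} = {}} = V w \<times> B - (\<lambda>j. (Suc j, j)) ` B"
    using key unfolding occ_DU B_def[symmetric] by auto
  have sub: "(\<lambda>j. (Suc j, j)) ` B \<subseteq> V w \<times> B" by (auto simp: B_def occ_DDU V_def)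
  have fB: "finite B" unfolding B_def by (rule finite_occ)
  have cim: "card ((\<lambda>j. (Suc j, j)) ` B) = card B" by (rule card_image) (auto simp: inj_on_def)
  have "num_occ [[D,U],[D,D,U]] w = card (V w \<times> B - (\<lambda>j. (Suc j, j)) ` B)"
    using num_occ_2[of "[D,U]" "[D,D,U]" w] X by simp
  also have "\<dots> = card (V w) * card B - card B"
    using card_Diff_subset[OF finite_subset[OF sub] sub] fB finite_V[of w] cim by (simp add: card_cartesian_product)
  finally have e: "num_occ [[D,U],[D,D,U]] w = card (V w) * card B - card B" .
  have "card B \<le> card (V w) * card B"
    using card_mono[OF _ sub] fB finite_V[of w] cim by (simp add: card_cartesian_product)
  then show ?thesis unfolding e B_def[symmetric] by (simp add: of_nat_diff)
qed

lemma N_DUU: "int (num_occ [[D,U],[D,U,U]] w) = int (card (V w)) * int (card (occ [D,U,U] w)) - int (card (occ [D,U,U] w))"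
proof -
  define B where "B = occ [D,U,U] w"
  have key: "({i..<i + length [D,U]} \<inter> {j..<j + length [D,U,U]} = {}) \<longleftrightarrow> i \<noteq> j"
    if "i \<in> V w" "j \<in> B" for i j
  proof -
    have v: "Suc i < length w" "w!i = D" "w!Suc i = U" using that by (auto simp: V_def)
    have b: "Suc (Suc j) < length w" "w!j = D" "w!Suc j = U" "w!Suc(Suc j) = U" using that by (auto simp: B_def occ_DUU)
    have "i \<noteq> Suc j" "Suc i \<noteq> j" "i \<noteq> Suc (Suc j)" using v b by auto
    then show ?thesis by (auto simp: ivl_disj numeral_2_eq_2 numeral_3_eq_3)
  qed
  have X: "{(i,j). i \<in> occ [D,U] w \<and> j \<in> occ [D,U,U] w \<and>
     {i..<i + length [D,U]} \<inter> {j..<j + length [D,U,U]} = {}} = V w \<times> B - (\<lambda>j. (j, j)) ` B"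
    using key unfolding occ_DU B_def[symmetric] by auto
  have sub: "(\<lambda>j. (j, j)) ` B \<subseteq> V w \<times> B" by (auto simp: B_def occ_DUU V_def)
  have fB: "finite B" unfolding B_def by (rule finite_occ)
  have cim: "card ((\<lambda>j. (j, j)) ` B) = card B" by (rule card_image) (auto simp: inj_on_def)
  have "num_occ [[D,U],[D,U,U]] w = card (V w \<times> B - (\<lambda>j. (j, j)) ` B)"
    using num_occ_2[of "[D,U]" "[D,U,U]" w] X by simp
  also have "\<dots> = card (V w) * card B - card B"
    using card_Diff_subset[OF finite_subset[OF sub] sub] fB finite_V[of w] cim by (simp add: card_cartesian_product)
  finally have e: "num_occ [[D,U],[D,U,U]] w = card (V w) * card B - card B" .
  have "card B \<le> card (V w) * card B"
    using card_mono[OF _ sub] fB finite_V[of w] cim by (simp add: card_cartesian_product)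
  then show ?thesis unfolding e B_def[symmetric] by (simp add: of_nat_diff)
qed

lemma pointwise: "(\<Sum>i\<in>V \<gamma>. \<Sum>j\<in>V (flip \<gamma> i). card (V (flip (flip \<gamma> i) j))) =
        6 * num_occ [[D,U],[D,U],[D,U]] \<gamma>
      + 3 * num_occ [[D,U],[D,D,U]] \<gamma>
      + 3 * num_occ [[D,U],[D,U,U]] \<gamma>
      + num_occ [[D,D,D,U]] \<gamma>
      + num_occ [[D,U,U,U]] \<gamma>
      + 2 * num_occ [[D,D,U,U]] \<gamma>
      + 2 * num_occ [[D,U,D,U]] \<gamma>"
proof -
  have "int (6 * num_occ [[D,U],[D,U],[D,U]] \<gamma>
      + 3 * num_occ [[D,U],[D,D,U]] \<gamma>
      + 3 * num_occ [[D,U],[D,U,U]] \<gamma>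
      + num_occ [[D,D,D,U]] \<gamma>
      + num_occ [[D,U,U,U]] \<gamma>
      + 2 * num_occ [[D,D,U,U]] \<gamma>
      + 2 * num_occ [[D,U,D,U]] \<gamma>) =
      6 * int (num_occ [[D,U],[D,U],[D,U]] \<gamma>)
      + 3 * int (num_occ [[D,U],[D,D,U]] \<gamma>)
      + 3 * int (num_occ [[D,U],[D,U,U]] \<gamma>)
      + int (num_occ [[D,D,D,U]] \<gamma>)
      + int (num_occ [[D,U,U,U]] \<gamma>)
      + 2 * int (num_occ [[D,D,U,U]] \<gamma>)
      + 2 * int (num_occ [[D,U,D,U]] \<gamma>)" by simp
  also have "\<dots> = int (\<Sum>i\<in>V \<gamma>. \<Sum>j\<in>V (flip \<gamma> i). card (V (flip (flip \<gamma> i) j)))"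
    unfolding f_lemma N_DDU N_DUU N3 choose3 num_occ_1 by (simp add: algebra_simps)
  finally have h: "int (6 * num_occ [[D,U],[D,U],[D,U]] \<gamma>
      + 3 * num_occ [[D,U],[D,D,U]] \<gamma>
      + 3 * num_occ [[D,U],[D,U,U]] \<gamma>
      + num_occ [[D,D,D,U]] \<gamma>
      + num_occ [[D,U,U,U]] \<gamma>
      + 2 * num_occ [[D,D,U,U]] \<gamma>
      + 2 * num_occ [[D,U,D,U]] \<gamma>) = int (\<Sum>i\<in>V \<gamma>. \<Sum>j\<in>V (flip \<gamma> i). card (V (flip (flip \<gamma> i) j)))" .
  show ?thesis using h[symmetric] by (simp only: of_nat_eq_iff)
qed

theorem mainTheorem6:
  shows "Abs_fps (\<lambda>n. of_nat (sc3 n) :: int) =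
    Abs_fps (\<lambda>n. of_nat (\<Sum>\<gamma>\<in>Dyck n.
        6 * num_occ [[D,U],[D,U],[D,U]] \<gamma>
      + 3 * num_occ [[D,U],[D,D,U]] \<gamma>
      + 3 * num_occ [[D,U],[D,U,U]] \<gamma>
      + num_occ [[D,D,D,U]] \<gamma>
      + num_occ [[D,U,U,U]] \<gamma>
      + 2 * num_occ [[D,D,U,U]] \<gamma>
      + 2 * num_occ [[D,U,D,U]] \<gamma>))"
proof -
  have "\<And>n. sc3 n = (\<Sum>\<gamma>\<in>Dyck n.
        6 * num_occ [[D,U],[D,U],[D,U]] \<gamma>
      + 3 * num_occ [[D,U],[D,D,U]] \<gamma>
      + 3 * num_occ [[D,U],[D,U,U]] \<gamma>
      + num_occ [[D,D,D,U]] \<gamma>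
      + num_occ [[D,U,U,U]] \<gamma>
      + 2 * num_occ [[D,D,U,U]] \<gamma>
      + 2 * num_occ [[D,U,D,U]] \<gamma>)"
    unfolding sc3_sum by (intro sum.cong refl pointwise)
  then show ?thesis by simp
qed


end
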